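(* Let $m\ge2$ be an integer. Let $N>0$, $\tau=x+iy$ with $y=\frac{1}{2\sqrt{6N}}$ and $y\le|x|\le\frac12$. Then \[ \left|\frac{1}{(q;q)_\infty}\big(h(q)-m\,h(q^m)\big)\right|\ll N^{3/4}e^{\frac\pi2\sqrt{N/6}}. \]
   Context: $q=e^{2\pi i\tau}$, $(q;q)_\infty=\prod_{j\ge1}(1-q^j)$, $h(q)=\sum_{n=1}^\infty\frac{(-1)^{n+1}q^{n(n+1)/2}}{1-q^n}$. The implied constant is independent of $N$ and $x$. *)

theory Defs
  imports "HOL-Analysis.Analysis"
begin

definition qpoch_inf :: "complex \<Rightarrow> complex" where
  "qpoch_inf q = (\<Prod>j. (1 - q ^ (j + 1)))"

text \<open>h(q) = sum_{n>=1} (-1)^(n+1) q^(n(n+1)/2) / (1 - q^n).\<close>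
definition h_fun :: "complex \<Rightarrow> complex" where
  "h_fun q = (\<Sum>n. (-1) ^ (n + 2) * q ^ ((n + 1) * (n + 2) div 2) / (1 - q ^ (n + 1)))"

end

theory Submission
  imports Defs "HOL-Complex_Analysis.Weierstrass_Factorization"
begin

lemma taylor_core:
  fixes z :: complex
  assumes z0: "z \<noteq> 0" and zs: "norm z \<le> 1/2"
  shows "norm (exp z / (1 - exp z) + 1 / z + 1/2) \<le> 3 * norm z"
proof -
  define u where "u = - z"
  have us: "norm u \<le> 1/2" and u0: "u \<noteq> 0" using zs z0 by (auto simp: u_def)
  define D where "D = exp u - 1"
  have Dlow: "norm D \<ge> 1/2 * norm u" using norm_exp_bounds(1)[OF us] by (simp add: D_def)
  have D0: "D \<noteq> 0" using Dlow u0 by auto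
  define R where "R = D - u - u^2/2"
  have "norm (exp u - (\<Sum>i\<le>2. u ^ i / fact i)) \<le> exp (norm u) * (norm u ^ Suc 2) / fact 2"
    by (rule Taylor_exp_field)
  moreover have "(\<Sum>i\<le>2. u ^ i / fact i) = 1 + u + u^2/2"
    by (simp add: numeral_2_eq_2 eval_nat_numeral)
  moreover have "exp (norm u) \<le> 2"
  proof -
    have "exp (norm u) \<le> exp (1/2::real)" using us by simp
    also have "\<dots> \<le> 2" using exp_bound_half[of "1/2::real"] by simp
    finally show ?thesis .
  qed
  ultimately have Rb0: "norm R \<le> exp (norm u) * (norm u ^ 3) / 2"
    unfolding R_def D_def by (simp add: algebra_simps numeral_3_eq_3)
  have "exp (norm u) * (norm u ^ 3) / 2 \<le> 2 * (norm u ^ 3) / 2"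
    using \<open>exp (norm u) \<le> 2\<close> by (intro divide_right_mono mult_right_mono) auto
  with Rb0 have Rb: "norm R \<le> norm u ^ 3" by simp
  have e1: "exp z / (1 - exp z) = 1 / D"
  proof -
    have ez: "exp z = inverse (exp u)" by (simp add: u_def exp_minus)
    have "exp u \<noteq> 1" "exp u \<noteq> 0" using D0 by (auto simp: D_def)
    then show ?thesis unfolding ez D_def by (simp add: field_simps)
  qed
  have key: "1 / D + 1 / z + 1/2 = (- 2 * R + u^3/2 + u * R) / (2 * u * D)"
    using D0 u0 unfolding R_def u_def by (simp add: field_simps power2_eq_square power3_eq_cube)
  have "norm (- 2 * R + u^3/2 + u * R) \<le> 2 * norm u ^ 3 + norm u ^ 3 / 2 + norm u * norm u ^ 3"
  proof -
    have "norm (- 2 * R + u^3/2 + u * R) \<le> norm (-2 * R) + norm (u^3/2) + norm (u * R)"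
      by (meson norm_triangle_le order_refl add_mono norm_triangle_ineq)
    also have "\<dots> \<le> 2 * norm u ^ 3 + norm u ^ 3 / 2 + norm u * norm u ^ 3"
      using Rb by (auto simp: norm_mult norm_power intro!: add_mono mult_left_mono)
    finally show ?thesis .
  qed
  also have "\<dots> \<le> 3 * norm u ^ 3"
  proof -
    have "norm u * norm u ^ 3 \<le> 1/2 * norm u ^ 3" using us by (intro mult_right_mono) auto
    then show ?thesis by simp
  qed
  finally have num: "norm (- 2 * R + u^3/2 + u * R) \<le> 3 * norm u ^ 3" .
  have den: "norm (2 * u * D) \<ge> norm u ^ 2"
  proof -
    have "norm u * norm u \<le> norm u * (2 * norm D)" using Dlow by (intro mult_left_mono) auto
    then show ?thesis by (simp add: norm_mult power2_eq_square mult_ac)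
  qed
  have "norm (exp z / (1 - exp z) + 1 / z + 1/2) = norm (- 2 * R + u^3/2 + u * R) / norm (2 * u * D)"
    using e1 key by (simp add: norm_divide)
  also have "\<dots> \<le> 3 * norm u ^ 3 / norm u ^ 2"
    using num den u0 by (intro frac_le) auto
  also have "\<dots> = 3 * norm u" using u0 by (simp add: power2_eq_square power3_eq_cube)
  finally show ?thesis by (simp add: u_def)
qed

lemma pow_lt1: "norm (q::complex) < 1 \<Longrightarrow> n \<noteq> 0 \<Longrightarrow> norm (q^n) < 1"
  by (simp add: norm_power power_less_one_iff)

lemma lambert:
  fixes q :: complex
  assumes q1: "norm q < 1"
  shows "norm (qpoch_inf q) = exp (- (\<Sum>j. Re (q^j / (1 - q^j)) / real j))"
    and "summable (\<lambda>j. Re (q^j / (1 - q^j)) / real j)"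
proof -
  define r where "r = norm q"
  have r0: "0 \<le> r" and r1: "r < 1" using q1 by (auto simp: r_def)
  define a where "a n j = - Re (q^((n+1)*j)) / real j" for n j
  have abound: "norm (a n j) \<le> r^n * r^j" for n j
  proof (cases "j = 0")
    case True then show ?thesis using r0 by (simp add: a_def)
  next
    case False
    have "norm (a n j) = \<bar>Re (q^((n+1)*j))\<bar> / real j" by (simp add: a_def)
    also have "\<dots> \<le> \<bar>Re (q^((n+1)*j))\<bar> / 1"
      using False by (intro divide_left_mono) auto
    also have "\<dots> = \<bar>Re (q^((n+1)*j))\<bar>" by simp
    also have "\<dots> \<le> norm (q^((n+1)*j))" by (rule abs_Re_le_cmod)
    also have "\<dots> = r^((n+1)*j)" by (simp add: r_def norm_power)
    also have "\<dots> \<le> r^(n+j)"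
      using False r0 r1 by (intro power_decreasing) (auto simp: algebra_simps)
    finally show ?thesis by (simp add: power_add)
  qed
  have geo: "(\<lambda>j. r^j) sums (1/(1-r))" using geometric_sums[of r] r0 r1 by simp
  have gsum: "(\<lambda>(n,j). r^n * r^j) summable_on (UNIV \<times> UNIV)"
  proof (rule summable_on_SigmaI[where g = "\<lambda>n. r^n / (1-r)"])
    show "((\<lambda>j. case (n, j) of (n, j) \<Rightarrow> r^n * r^j) has_sum r^n / (1-r)) UNIV" for n
      using sums_mult[OF geo, of "r^n"] r0
      by (intro sums_nonneg_imp_has_sum) (auto simp: field_simps)
    show "(\<lambda>n. r^n / (1-r)) summable_on UNIV"
      using sums_divide[OF geo, of "1-r"] r0 r1 unfolding summable_on_def
      by (intro exI sums_nonneg_imp_has_sum) auto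
  qed (use r0 in auto)
  have asum: "(\<lambda>(n,j). a n j) summable_on (UNIV \<times> UNIV)"
  proof (rule abs_summable_summable, rule Infinite_Sum.abs_summable_on_comparison_test)
    show "(\<lambda>x. norm ((\<lambda>(n,j). r^n * r^j) x)) summable_on (UNIV \<times> UNIV)"
      using gsum r0 by (simp add: case_prod_unfold)
    show "norm ((\<lambda>(n,j). a n j) x) \<le> norm ((\<lambda>(n,j). r^n * r^j) x)" for x
      using abound[of "fst x" "snd x"] r0 by (auto simp: case_prod_beta)
  qed
  have swap: "infsum (\<lambda>n. infsum (\<lambda>j. a n j) UNIV) UNIV = infsum (\<lambda>j. infsum (\<lambda>n. a n j) UNIV) UNIV"
    by (rule infsum_swap_banach[OF asum])
  have Fsum: "(\<lambda>n. infsum (\<lambda>j. a n j) UNIV) summable_on UNIV"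
    using summable_on_Sigma_banach[of "\<lambda>n j. a n j" UNIV "\<lambda>_. UNIV"] asum by simp
  have asum': "(\<lambda>(j,n). a n j) summable_on (UNIV \<times> UNIV)"
    using asum summable_on_swap[of "\<lambda>(n,j). a n j" UNIV UNIV] by simp
  have Gsum: "(\<lambda>j. infsum (\<lambda>n. a n j) UNIV) summable_on UNIV"
    using summable_on_Sigma_banach[of "\<lambda>j n. a n j" UNIV "\<lambda>_. UNIV"] asum' by simp
  have F: "infsum (\<lambda>j. a n j) UNIV = ln (norm (1 - q^(n+1)))" for n
  proof -
    have w1: "norm (q^(n+1)) < 1" using q1 by (intro pow_lt1) auto
    have w0: "1 - q^(n+1) \<noteq> 0" using w1 by auto
    have "(\<lambda>j. - (((q^(n+1)))^j) / of_nat j) sums ln (1 + - (q^(n+1)))"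
      using Ln_series'[of "- (q^(n+1))"] w1 by simp
    from sums_Re[OF this] have "(\<lambda>j. - Re ((q^(n+1))^j) / real j) sums ln (norm (1 - q^(n+1)))"
      using w0 by (simp add: Re_divide_of_nat)
    moreover have "(\<lambda>j. a n j) = (\<lambda>j. - Re ((q^(n+1))^j) / real j)"
      by (simp only: a_def power_mult)
    ultimately have "(\<lambda>j. a n j) sums ln (norm (1 - q^(n+1)))" by simp
    moreover have "summable (\<lambda>j. norm (a n j))"
      by (rule summable_comparison_test[of _ "\<lambda>j. r^n * r^j"])
         (use abound sums_summable[OF sums_mult[OF geo, of "r^n"]] in auto)
    ultimately show ?thesis by (intro infsumI norm_summable_imp_has_sum)
  qed
  have G: "infsum (\<lambda>n. a n j) UNIV = - (Re (q^j / (1 - q^j)) / real j)" for j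
  proof (cases "j = 0")
    case True then show ?thesis by (simp add: a_def)
  next
    case False
    have w1: "norm (q^j) < 1" using q1 False by (intro pow_lt1) auto
    have "(\<lambda>n. (q^j)^n) sums (1/(1-q^j))" using geometric_sums[OF w1] by simp
    from sums_mult[OF this, of "q^j"] have "(\<lambda>n. (q^j)^(n+1)) sums (q^j / (1-q^j))"
      by (simp add: power_Suc mult_ac)
    from sums_minus[OF sums_divide[OF sums_Re[OF this], of "real j"]]
    have "(\<lambda>n. - (Re ((q^j)^(n+1)) / real j)) sums (- (Re (q^j / (1 - q^j)) / real j))"
      by simp
    moreover have "(\<lambda>n. a n j) = (\<lambda>n. - (Re ((q^j)^(n+1)) / real j))"
    proof
      fix n show "a n j = - (Re ((q^j)^(n+1)) / real j)"
        unfolding a_def mult.commute[of "n+1" j] power_mult by (simp only: minus_divide_left)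
    qed
    ultimately have "(\<lambda>n. a n j) sums (- (Re (q^j / (1 - q^j)) / real j))" by simp
    moreover have "summable (\<lambda>n. norm (a n j))"
      by (rule summable_comparison_test[of _ "\<lambda>n. r^n * r^j"])
         (use abound sums_summable[OF sums_mult2[OF geo, of "r^j"]] in auto)
    ultimately show ?thesis by (intro infsumI norm_summable_imp_has_sum)
  qed
  have Fs: "(\<lambda>n. ln (norm (1 - q^(n+1)))) sums infsum (\<lambda>n. infsum (\<lambda>j. a n j) UNIV) UNIV"
    using has_sum_imp_sums[OF has_sum_infsum[OF Fsum]] by (simp add: F)
  have Gs: "(\<lambda>j. - (Re (q^j / (1 - q^j)) / real j)) sums infsum (\<lambda>n. infsum (\<lambda>j. a n j) UNIV) UNIV"
    using has_sum_imp_sums[OF has_sum_infsum[OF Gsum]] by (simp add: G swap)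
  show summ: "summable (\<lambda>j. Re (q^j / (1 - q^j)) / real j)"
    using summable_minus_iff Gs sums_summable by blast
  define S where "S = (\<Sum>j. Re (q^j / (1 - q^j)) / real j)"
  have Fs': "(\<lambda>n. ln (norm (1 - q^(n+1)))) sums (- S)"
    using Fs Gs sums_unique2 summ unfolding S_def
    by (metis sums_minus summable_sums)
  have cp: "convergent_prod (\<lambda>j. 1 - q^(j+1))"
  proof -
    have "convergent_prod (\<lambda>k. 1 + (-(q^(k+1))))"
    proof (rule summable_imp_convergent_prod_complex)
      show "summable (\<lambda>k. norm (-(q^(k+1))))"
      proof -
        have "summable (\<lambda>k. r * r^k)" using r0 r1 by (intro summable_mult summable_geometric) auto
        then show ?thesis by (simp add: norm_mult norm_power r_def)
      qed
      show "-(q^(k+1)) \<noteq> -1" for k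
      proof
        assume "-(q^(k+1)) = -1"
        then have "norm (q^(k+1)) = 1" by (metis minus_equation_iff norm_minus_cancel norm_one)
        moreover have "norm (q^(k+1)) < 1" using q1 by (intro pow_lt1) auto
        ultimately show False by simp
      qed
    qed
    then show ?thesis by simp
  qed
  have L1: "(\<lambda>n. norm (\<Prod>i\<le>n. (1 - q^(i+1)))) \<longlonglongrightarrow> norm (qpoch_inf q)"
    unfolding qpoch_inf_def by (intro tendsto_norm convergent_prod_LIMSEQ cp)
  have nz: "1 - q^(i+1) \<noteq> 0" for i
  proof
    assume "1 - q^(i+1) = 0"
    then have "norm (q^(i+1)) = 1" by simp
    moreover have "norm (q^(i+1)) < 1" using q1 by (intro pow_lt1) auto
    ultimately show False by simp
  qed
  have eqp: "norm (\<Prod>i\<le>n. (1 - q^(i+1))) = exp (\<Sum>i\<le>n. ln (norm (1 - q^(i+1))))" for n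
    using nz by (simp add: prod_norm exp_sum)
  have L2: "(\<lambda>n. exp (\<Sum>i\<le>n. ln (norm (1 - q^(i+1))))) \<longlonglongrightarrow> exp (- S)"
  proof (rule tendsto_exp)
    show "(\<lambda>n. \<Sum>i\<le>n. ln (norm (1 - q^(i+1)))) \<longlonglongrightarrow> - S"
      using Fs' unfolding sums_def by (simp add: LIMSEQ_lessThan_iff_atMost)
  qed
  show "norm (qpoch_inf q) = exp (- S)"
    using LIMSEQ_unique[OF L1] L2 eqp by simp
qed

lemma gauss_sum_aux:
  fixes \<rho> :: real and M :: nat
  assumes r0: "0 \<le> \<rho>" and r1: "\<rho> < 1" and M1: "M \<ge> 1"
  shows "\<rho>^M \<le> 1 / (1 + real M * (1 - \<rho>))"
proof -
  define d where "d = 1 - \<rho>"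
  have "\<rho> \<le> exp (- d)" using exp_ge_add_one_self[of "-d"] by (simp add: d_def)
  then have "\<rho>^M \<le> exp (- d)^M" using r0 by (intro power_mono) auto
  also have "\<dots> = exp (- (real M * d))" by (simp add: exp_of_nat_mult[symmetric])
  also have "\<dots> = 1 / exp (real M * d)" by (simp add: exp_minus field_simps)
  also have "\<dots> \<le> 1 / (1 + real M * d)"
  proof -
    have "0 \<le> real M * d" using r1 by (simp add: d_def)
    then show ?thesis using exp_ge_add_one_self[of "real M * d"] by (intro divide_left_mono) auto
  qed
  finally show ?thesis by (simp add: d_def)
qed

lemma h_bound:
  fixes w :: complex
  assumes w1: "norm w < 1"
  shows "norm (h_fun w) \<le> 6 / ((1 - norm w) * sqrt (1 - norm w))"
proof -
  define \<rho> where "\<rho> = norm w"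
  define \<delta> where "\<delta> = 1 - \<rho>"
  have r0: "0 \<le> \<rho>" and r1: "\<rho> < 1" using w1 by (auto simp: \<rho>_def)
  have d0: "0 < \<delta>" and d1: "\<delta> \<le> 1" using r0 r1 by (auto simp: \<delta>_def)
  define s where "s = sqrt \<delta>"
  have s0: "0 < s" and s1: "s \<le> 1" and ss: "s * s = \<delta>" using d0 d1 by (auto simp: s_def)
  define M where "M = nat \<lceil>1 / s\<rceil>"
  have Mr: "real M = of_int \<lceil>1 / s\<rceil>" using s0 unfolding M_def
    by (simp add: less_imp_le)
  have M1: "real M \<ge> 1 / s" unfolding Mr by (rule le_of_int_ceiling)
  have M2: "real M \<le> 1 / s + 1" unfolding Mr using of_int_ceiling_le_add_one[of "1/s"] by simp
  have one_s: "1 \<le> 1 / s" using s0 s1 by (simp add: field_simps)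
  have Mge1: "M \<ge> 1" using M1 one_s by linarith
  define t where "t n = (-1) ^ (n + 2) * w ^ ((n + 1) * (n + 2) div 2) / (1 - w ^ (n + 1))" for n
  define m where "m n = ((if n < 2*M then 1 else 0) + (\<rho>^M)^n) / \<delta>" for n
  have tb: "norm (t n) \<le> m n" for n
  proof -
    define T where "T = (n + 1) * (n + 2) div 2"
    have den: "norm (1 - w ^ (n + 1)) \<ge> \<delta>"
    proof -
      have "norm (w^(n+1)) = \<rho> * \<rho>^n" by (simp add: norm_power norm_mult \<rho>_def)
      also have "\<dots> \<le> \<rho> * 1" using r0 r1 by (intro mult_left_mono power_le_one) auto
      finally have "norm (w^(n+1)) \<le> \<rho>" by simp
      moreover have "norm (1::complex) - norm (w^(n+1)) \<le> norm (1 - w ^ (n + 1))"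
        by (rule norm_triangle_ineq2)
      ultimately show ?thesis by (simp add: \<delta>_def)
    qed
    have num: "\<rho>^T \<le> (if n < 2*M then 1 else 0) + (\<rho>^M)^n"
    proof (cases "n < 2*M")
      case True
      have "\<rho>^T \<le> 1" using r0 r1 by (simp add: power_le_one)
      moreover have "0 \<le> (\<rho>^M)^n" using r0 by simp
      ultimately show ?thesis using True by simp
    next
      case False
      have "2*(M*n) \<le> (n+1)*(n+2)"
      proof -
        have "2*M \<le> n+2" using False by simp
        then have "n*(2*M) \<le> (n+1)*(n+2)" by (intro mult_mono) auto
        then show ?thesis by (simp add: mult_ac)
      qed
      then have "(2*(M*n)) div 2 \<le> ((n+1)*(n+2)) div 2" by (rule div_le_mono)
      then have "M*n \<le> T" by (simp add: T_def)
      then have "\<rho>^T \<le> \<rho>^(M*n)" using r0 r1 by (intro power_decreasing) auto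
      then show ?thesis using False by (simp add: power_mult)
    qed
    have "norm (t n) = \<rho>^T / norm (1 - w ^ (n + 1))"
      by (simp add: t_def T_def norm_divide norm_mult norm_power \<rho>_def)
    also have "\<dots> \<le> \<rho>^T / \<delta>"
    proof (rule divide_left_mono)
      show "0 < norm (1 - w ^ (n + 1)) * \<delta>" using den d0 by (intro mult_pos_pos) auto
    qed (use den r0 in auto)
    also have "\<dots> \<le> m n" unfolding m_def using num d0 by (intro divide_right_mono) auto
    finally show ?thesis .
  qed
  have rM: "\<rho>^M < 1" using r0 r1 Mge1 by (simp add: power_less_one_iff)
  have ms: "m sums ((real (2*M) + 1 / (1 - \<rho>^M)) / \<delta>)"
  proof -
    have a: "(\<lambda>n. if n < 2*M then (1::real) else 0) sums real (2*M)"
      using sums_If_finite_set[of "{..<2*M}" "\<lambda>_. (1::real)"] by simp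
    have b: "(\<lambda>n. (\<rho>^M)^n) sums (1 / (1 - \<rho>^M))"
      using geometric_sums[of "\<rho>^M"] rM r0 by simp
    show ?thesis unfolding m_def by (intro sums_divide sums_add a b)
  qed
  have summ: "summable (\<lambda>n. norm (t n))"
    by (rule summable_comparison_test[OF _ sums_summable[OF ms]]) (use tb in auto)
  have "norm (h_fun w) = norm (\<Sum>n. t n)" by (simp add: h_fun_def t_def)
  also have "\<dots> \<le> (\<Sum>n. norm (t n))" by (rule summable_norm[OF summ])
  also have "\<dots> \<le> (\<Sum>n. m n)" by (rule suminf_le[OF tb summ sums_summable[OF ms]])
  also have "\<dots> = (real (2*M) + 1 / (1 - \<rho>^M)) / \<delta>" using ms by (simp add: sums_iff)
  also have "\<dots> \<le> (6 / s) / \<delta>"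
  proof (intro divide_right_mono)
    have g: "\<rho>^M \<le> 1 / (1 + real M * \<delta>)" using gauss_sum_aux[OF r0 r1 Mge1] by (simp add: \<delta>_def)
    have Md: "real M * \<delta> \<ge> s"
    proof -
      have "real M * \<delta> \<ge> (1/s) * \<delta>" using M1 d0 by (intro mult_right_mono) auto
      moreover have "(1/s) * \<delta> = s" using s0 unfolding ss[symmetric] by (simp add: field_simps)
      ultimately show ?thesis by simp
    qed
    have Md0: "real M * \<delta> > 0" using Md s0 by linarith
    have "1 - \<rho>^M \<ge> 1 - 1 / (1 + real M * \<delta>)" using g by simp
    also have "1 - 1 / (1 + real M * \<delta>) = (real M * \<delta>) / (1 + real M * \<delta>)"
      using Md0 by (simp add: field_simps)
    finally have le1: "(real M * \<delta>) / (1 + real M * \<delta>) \<le> 1 - \<rho>^M" .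
    have pos1: "0 < (real M * \<delta>) / (1 + real M * \<delta>)" using Md0 by simp
    have "1 / (1 - \<rho>^M) \<le> 1 / ((real M * \<delta>) / (1 + real M * \<delta>))"
      by (rule divide_left_mono[OF le1]) (use pos1 le1 rM Md0 in \<open>auto intro!: mult_pos_pos divide_pos_pos\<close>)
    also have "\<dots> = 1 + 1 / (real M * \<delta>)" using Md0 Mge1 d0 by (simp add: add_divide_distrib)
    also have "\<dots> \<le> 1 + 1 / s" using Md s0 by (intro add_left_mono divide_left_mono) auto
    finally have A: "1 / (1 - \<rho>^M) \<le> 1 + 1 / s" .
    have B: "real (2*M) \<le> 2 / s + 2" using M2 by simp
    show "real (2*M) + 1 / (1 - \<rho>^M) \<le> 6 / s" using A B one_s by simp
  qed (use d0 in auto)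
  also have "\<dots> = 6 / ((1 - norm w) * sqrt (1 - norm w))"
    by (simp add: s_def \<delta>_def \<rho>_def divide_divide_eq_left mult.commute)
  finally show ?thesis .
qed

definition qq :: "real \<Rightarrow> real \<Rightarrow> complex" where
  "qq x y = exp (2 * complex_of_real pi * \<i> * Complex x y)"

definition AA :: "real \<Rightarrow> real \<Rightarrow> nat \<Rightarrow> real" where
  "AA x y j = Re (qq x y ^ j / (1 - qq x y ^ j)) / real j"

lemma qq_pow: "qq x y ^ j = exp (of_nat j * (2 * complex_of_real pi * \<i> * Complex x y))"
  by (simp add: qq_def exp_of_nat_mult)

lemma norm_qq_pow: "norm (qq x y ^ j) = exp (- (2 * pi * y * real j))"
  by (simp add: qq_pow)

lemma cancel_aux: "(c::real) \<noteq> 0 \<Longrightarrow> - (c * y) / (c * (c * A)) = - (y / (c * A))"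
  by (cases "A = 0") (auto simp: field_simps)

lemma AA0: "AA x y 0 = 0" by (simp add: AA_def)

lemma re_frac_le: fixes w :: complex assumes "norm w < 1"
  shows "Re (w / (1 - w)) \<le> norm w / (1 - norm w)"
proof -
  have "Re (w / (1 - w)) \<le> norm (w / (1 - w))" by (rule complex_Re_le_cmod)
  also have "\<dots> = norm w / norm (1 - w)" by (simp add: norm_divide)
  also have "\<dots> \<le> norm w / (1 - norm w)"
  proof (rule divide_left_mono)
    show "1 - norm w \<le> norm (1 - w)" using norm_triangle_ineq2[of 1 w] by simp
    then show "0 < norm (1 - w) * (1 - norm w)" using assms by (intro mult_pos_pos) auto
  qed (use assms in auto)
  finally show ?thesis .
qed

lemma AA_T1:
  assumes y0: "0 < y" and j: "j \<ge> 1"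
  shows "AA x y j \<le> 1 / (2 * pi * y * (real j)^2)"
proof -
  define s where "s = 2 * pi * y * real j"
  have s0: "s > 0" using y0 j by (simp add: s_def)
  have n1: "norm (qq x y ^ j) < 1" using s0 by (simp add: norm_qq_pow s_def[symmetric])
  have "Re (qq x y ^ j / (1 - qq x y ^ j)) \<le> exp (- s) / (1 - exp (- s))"
    using re_frac_le[OF n1] by (simp add: norm_qq_pow s_def)
  also have "\<dots> \<le> 1 / s"
  proof -
    have e: "exp (-s) < 1" using s0 by simp
    have "exp (-s) * (1 + s) \<le> 1"
    proof -
      have "1 + s \<le> exp s" by (rule exp_ge_add_one_self)
      then have "exp (-s) * (1 + s) \<le> exp (-s) * exp s" by (intro mult_left_mono) auto
      then show ?thesis by (simp add: exp_minus)
    qed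
    then show ?thesis using e s0 by (simp add: field_simps)
  qed
  finally have "Re (qq x y ^ j / (1 - qq x y ^ j)) \<le> 1 / s" .
  then have "AA x y j \<le> (1 / s) / real j" unfolding AA_def using j
    by (intro divide_right_mono) auto
  also have "\<dots> = 1 / (2 * pi * y * (real j)^2)" by (simp add: s_def power2_eq_square)
  finally show ?thesis .
qed

lemma AA_T2:
  assumes y0: "0 < y" and j: "j \<ge> 1" and small: "2 * pi * real j * cmod (Complex x y) \<le> 1/2"
  shows "AA x y j \<le> y / (2 * pi * (x^2 + y^2) * (real j)^2) + 6 * pi * cmod (Complex x y)"
proof -
  define z where "z = of_nat j * (2 * complex_of_real pi * \<i> * Complex x y)"
  have zC: "z = Complex (- (2 * pi * real j * y)) (2 * pi * real j * x)"
    by (simp add: z_def complex_eq_iff)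
  have a0: "x^2 + y^2 > 0" using y0 by (simp add: add_nonneg_pos)
  have nz: "norm z = 2 * pi * real j * cmod (Complex x y)"
    by (simp add: z_def norm_mult)
  have z0: "z \<noteq> 0"
  proof
    assume "z = 0"
    then have "Re z = 0" by simp
    then show False using y0 j by (simp add: zC)
  qed
  have zs: "norm z \<le> 1/2" using small nz by simp
  have T: "norm (exp z / (1 - exp z) + 1 / z + 1/2) \<le> 3 * norm z" by (rule taylor_core[OF z0 zs])
  have rez: "Re (1 / z) = - (y / (2 * pi * real j * (x^2 + y^2)))"
  proof -
    have "Re (1 / z) = Re z / ((Re z)^2 + (Im z)^2)" by (simp add: Re_divide cmod_power2)
    also have "\<dots> = - (2 * pi * real j * y) / ((2 * pi * real j) * ((2 * pi * real j) * (x^2 + y^2)))"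
      by (simp add: zC power_mult_distrib algebra_simps power2_eq_square)
    also have "\<dots> = - (y / (2 * pi * real j * (x^2 + y^2)))"
    proof -
      have c0: "2 * pi * real j \<noteq> 0" using j by simp
      show ?thesis by (rule cancel_aux[OF c0])
    qed
    finally show ?thesis .
  qed
  have "Re (exp z / (1 - exp z)) = Re (exp z / (1 - exp z) + 1 / z + 1/2) - Re (1 / z) - 1/2"
    by simp
  also have "\<dots> \<le> 3 * norm z - Re (1/z)"
    using complex_Re_le_cmod[of "exp z / (1 - exp z) + 1 / z + 1/2"] T by linarith
  finally have R: "Re (exp z / (1 - exp z)) \<le> 3 * (2 * pi * real j * cmod (Complex x y)) + y / (2 * pi * real j * (x^2 + y^2))"
    using rez nz by simp
  have "AA x y j = Re (exp z / (1 - exp z)) / real j" by (simp add: AA_def qq_pow z_def)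
  also have "\<dots> \<le> (3 * (2 * pi * real j * cmod (Complex x y)) + y / (2 * pi * real j * (x^2 + y^2))) / real j"
    using R j by (intro divide_right_mono) auto
  also have "\<dots> = y / (2 * pi * (x^2 + y^2) * (real j)^2) + 6 * pi * cmod (Complex x y)"
  proof -
    have j0: "real j \<noteq> 0" using j by simp
    have "(3 * (2 * pi * real j * cmod (Complex x y))) / real j = 6 * pi * cmod (Complex x y)"
      using j0 by simp
    moreover have "(y / (2 * pi * real j * (x^2 + y^2))) / real j = y / (2 * pi * (x^2 + y^2) * (real j)^2)"
      by (simp add: divide_divide_eq_left power2_eq_square mult_ac)
    ultimately show ?thesis by (simp add: add_divide_distrib)
  qed
  finally show ?thesis .
qed

definition Zf :: "nat \<Rightarrow> real" where "Zf j = (if j = 0 then 0 else 1 / (real j)^2)"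

lemma Zf_nonneg: "Zf j \<ge> 0" by (simp add: Zf_def)

lemma Zs: "Zf sums (pi^2 / 6)"
proof -
  have "(\<lambda>i. Zf (i + 1)) sums (pi^2 / 6)"
    using inverse_squares_sums by (simp add: Zf_def)
  then show ?thesis using sums_iff_shift[of Zf 1 "pi^2/6"] by (simp add: Zf_def)
qed

lemma pi_sq_le: "pi^2 \<le> 10" 
proof -
  have "pi \<le> 3.1415926535899" by (rule pi_approx(2))
  then have "pi * pi \<le> 3.1415926535899 * 3.1415926535899" using pi_gt_zero
    by (intro mult_mono) auto
  then show ?thesis by (simp add: power2_eq_square)
qed

lemma summable_AA: "0 < y \<Longrightarrow> summable (AA x y)"
proof -
  assume y0: "0 < y"
  have "norm (qq x y) < 1" using norm_qq_pow[of x y 1] y0 by simp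
  from lambert(2)[OF this] show ?thesis by (simp add: AA_def[abs_def])
qed

lemma AA_T3:
  assumes y0: "0 < y" and xy: "y \<le> \<bar>x\<bar>" and x2: "\<bar>x\<bar> \<le> 1/2"
    and big: "x^2 + y^2 > 1 / (64 * pi^2)"
  shows "AA x y 1 \<le> exp pi / sin (1/6)"
proof -
  define q where "q = qq x y"
  define \<theta> where "\<theta> = 2 * pi * \<bar>x\<bar>"
  define e where "e = exp (- (2 * pi * y))"
  have Rew: "Re (2 * complex_of_real pi * \<i> * Complex x y) = - (2 * pi * y)" by simp
  have Imw: "Im (2 * complex_of_real pi * \<i> * Complex x y) = 2 * pi * x" by simp
  have cth: "cos (2 * pi * x) = cos \<theta>"
  proof (cases "x \<ge> 0")
    case True then show ?thesis by (simp add: \<theta>_def)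
  next
    case False
    then have "\<theta> = - (2 * pi * x)" by (simp add: \<theta>_def)
    then show ?thesis by (simp only: cos_minus)
  qed
  have sth: "\<bar>sin (2 * pi * x)\<bar> = \<bar>sin \<theta>\<bar>"
  proof (cases "x \<ge> 0")
    case True then show ?thesis by (simp add: \<theta>_def)
  next
    case False
    then have "\<theta> = - (2 * pi * x)" by (simp add: \<theta>_def)
    then show ?thesis by (simp only: sin_minus abs_minus_cancel)
  qed
  have Req: "Re q = e * cos \<theta>"
    unfolding q_def qq_def Re_exp Rew Imw cth e_def ..
  have Imq: "\<bar>Im q\<bar> = e * sin \<theta>"
  proof -
    have "Im q = e * sin (2 * pi * x)" unfolding q_def qq_def Im_exp Rew Imw e_def ..
    moreover have "sin \<theta> \<ge> 0" unfolding \<theta>_def using x2 by (intro sin_ge_zero) auto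
    moreover have "e > 0" by (simp add: e_def)
    ultimately show ?thesis using sth by (simp add: abs_mult)
  qed
  have e0: "0 < e" by (simp add: e_def)
  have e1: "e \<le> 1" using y0 by (simp add: e_def)
  have eL: "exp (- pi) \<le> e" using xy x2 y0 by (simp add: e_def)
  have th0: "0 \<le> \<theta>" and thpi: "\<theta> \<le> pi" using x2 by (auto simp: \<theta>_def)
  have th6: "1/6 < \<theta>"
  proof -
    have "x^2 \<ge> y^2" using xy y0 by (metis abs_le_square_iff abs_of_pos)
    then have "2 * x^2 > 1 / (64 * pi^2)" using big by linarith
    then have "x^2 > 1 / (128 * pi^2)" by simp
    then have "(2 * pi)^2 * x^2 > (2 * pi)^2 * (1 / (128 * pi^2))" using pi_gt_zero
      by (intro mult_strict_left_mono) auto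
    moreover have "(2 * pi)^2 * (1 / (128 * pi^2)) = 1/32" using pi_gt_zero
      by (simp add: power2_eq_square)
    moreover have "\<theta>^2 = (2 * pi)^2 * x^2" by (simp add: \<theta>_def power_mult_distrib)
    ultimately have "\<theta>^2 > 1/32" by simp
    then have "\<theta>^2 > (1/6)^2" by (simp add: power2_eq_square)
    then show ?thesis by (rule power_less_imp_less_base[OF _ th0])
  qed
  have s6: "0 < sin (1/6::real)"
    using pi_gt3 by (intro sin_gt_zero) auto
  define c1 where "c1 = exp (- pi) * sin (1/6)"
  have c10: "0 < c1" using s6 by (simp add: c1_def)
  have c11: "c1 \<le> 1"
  proof -
    have "exp (- pi) \<le> 1" by simp
    moreover have "sin (1/6::real) \<le> 1" by simp
    ultimately show ?thesis unfolding c1_def using s6 by (intro mult_le_one) auto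
  qed
  have nb: "norm (1 - q) \<ge> c1"
  proof (cases "\<theta> \<le> pi/2")
    case True
    have a1: "- (pi/2) \<le> 1/6" using pi_gt_zero by linarith
    have a2: "1/6 \<le> \<theta>" using th6 by linarith
    have "sin (1/6) \<le> sin \<theta>" by (rule sin_monotone_2pi_le[OF a1 a2 True])
    then have "exp (- pi) * sin (1/6) \<le> e * sin \<theta>"
      by (rule mult_mono[OF eL]) (use e0 s6 in auto)
    then have "c1 \<le> e * sin \<theta>" by (simp add: c1_def)
    also have "\<dots> = \<bar>Im (1 - q)\<bar>" using Imq by simp
    also have "\<dots> \<le> norm (1 - q)" by (rule abs_Im_le_cmod)
    finally show ?thesis .
  next
    case False
    have b1: "- (pi/2) \<le> pi - \<theta>" using thpi pi_gt_zero by linarith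
    have b2: "pi - \<theta> \<le> pi/2" using False by linarith
    have "0 \<le> cos (pi - \<theta>)" by (rule cos_ge_zero[OF b1 b2])
    then have ct: "cos \<theta> \<le> 0" by (simp add: cos_diff)
    have "e * cos \<theta> \<le> 0" using e0 ct by (simp add: mult_nonneg_nonpos)
    then have "1 \<le> Re (1 - q)" using Req by simp
    also have "\<dots> \<le> norm (1 - q)" by (rule complex_Re_le_cmod)
    finally show ?thesis using c11 by linarith
  qed
  have nq: "norm q \<le> 1"
  proof -
    have "norm q = exp (- (2 * pi * y))" using norm_qq_pow[of x y 1] by (simp add: q_def)
    then show ?thesis using y0 by simp
  qed
  have "AA x y 1 = Re (q / (1 - q))" unfolding AA_def q_def by simp
  also have "\<dots> \<le> norm (q / (1 - q))" by (rule complex_Re_le_cmod)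
  also have "\<dots> = norm q / norm (1 - q)" by (rule norm_divide)
  also have "\<dots> \<le> 1 / c1"
    by (rule frac_le) (use nq nb c10 in auto)
  also have "\<dots> = exp pi / sin (1/6)"
  proof -
    have "exp (- pi) * exp pi = 1" by (simp add: exp_minus)
    then show ?thesis unfolding c1_def using s6 by (simp add: divide_simps) (metis mult.commute)
  qed
  finally show ?thesis .
qed

lemma tel_sums:
  fixes K :: nat assumes K1: "K \<ge> 1"
  shows "(\<lambda>j. if K < j then 1 / real (j - 1) - 1 / real j else 0) sums (1 / real K)"
proof -
  define tel where "tel j = (if K < j then 1 / real (j - 1) - 1 / real j else 0)" for j
  define f where "f i = 1 / real (i + K)" for i
  have fl: "f \<longlonglongrightarrow> 0"
    unfolding f_def using LIMSEQ_ignore_initial_segment[OF lim_inverse_n', of K] by simp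
  have "(\<lambda>i. f i - f (Suc i)) sums (f 0 - 0)" by (rule telescope_sums'[OF fl])
  moreover have "(\<lambda>i. tel (i + Suc K)) = (\<lambda>i. f i - f (Suc i))"
    by (rule ext) (simp add: tel_def f_def)
  ultimately have sh: "(\<lambda>i. tel (i + Suc K)) sums (1 / real K)" by (simp add: f_def)
  have "tel sums (1 / real K + (\<Sum>i<Suc K. tel i))"
    using sums_iff_shift[of tel "Suc K" "1 / real K"] sh by blast
  moreover have "(\<Sum>i<Suc K. tel i) = 0" by (intro sum.neutral) (auto simp: tel_def)
  ultimately show ?thesis by (simp add: tel_def[abs_def])
qed

lemma inv_sq_le_tel:
  fixes j :: nat assumes "j \<ge> 2"
  shows "1 / (real j)^2 \<le> 1 / real (j - 1) - 1 / real j"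
proof -
  have j1: "real (j - 1) = real j - 1" using assms by simp
  have "1 / real (j - 1) - 1 / real j = 1 / (real j * (real j - 1))"
    using assms unfolding j1 by (simp add: field_simps)
  also have "\<dots> \<ge> 1 / (real j * real j)"
    using assms by (intro divide_left_mono mult_left_mono mult_pos_pos) auto
  finally show ?thesis by (simp add: power2_eq_square)
qed

lemma L_bound:
  assumes y0: "0 < y" and xy: "y \<le> \<bar>x\<bar>" and x2: "\<bar>x\<bar> \<le> 1/2"
  shows "suminf (AA x y) \<le> pi / (24 * y) + (exp pi / sin (1/6) + 14)"
proof -
  define C1 where "C1 = exp pi / sin (1/6)"
  have s6: "0 < sin (1/6::real)" using pi_gt3 by (intro sin_gt_zero) auto
  have C10: "C1 > 0" using s6 by (simp add: C1_def)
  define nt where "nt = cmod (Complex x y)"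
  define A where "A = x^2 + y^2"
  have ntA: "nt^2 = A" by (simp add: nt_def A_def cmod_power2)
  have "Complex x y \<noteq> 0" using y0 by (simp add: complex_eq_iff)
  then have nt0: "nt > 0" by (simp add: nt_def)
  have A2: "A \<ge> 2 * y^2"
  proof -
    have "x^2 \<ge> y^2" using xy y0 by (metis abs_le_square_iff abs_of_pos)
    then show ?thesis by (simp add: A_def)
  qed
  have A0: "A > 0" using A2 y0 by (smt (verit) zero_less_power)
  have sAA: "summable (AA x y)" by (rule summable_AA[OF y0])
  have pi2: "pi^2 \<le> 10" by (rule pi_sq_le)
  have pip: "pi > 0" by simp
  have key: "pi^2 / 6 / (2 * pi * y) = pi / (12 * y)" using y0 by (simp add: power2_eq_square field_simps)
  show ?thesis
  proof (cases "nt > 1 / (8 * pi)")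
    case True
    define b where "b j = Zf j / (2 * pi * y) + (if j = 1 then C1 - 1 / (2 * pi * y) else 0)" for j
    have bs: "b sums (pi^2 / 6 / (2 * pi * y) + (C1 - 1 / (2 * pi * y)))"
      unfolding b_def by (intro sums_add sums_divide Zs) (rule sums_single)
    have big: "x^2 + y^2 > 1 / (64 * pi^2)"
    proof -
      have "nt^2 > (1 / (8 * pi))^2" using True by (intro power_strict_mono) auto
      then show ?thesis using ntA by (simp add: A_def power_mult_distrib power2_eq_square)
    qed
    have le: "AA x y j \<le> b j" for j
    proof -
      consider "j = 0" | "j = 1" | "j \<ge> 2" by linarith
      then show ?thesis
      proof cases
        case 1 then show ?thesis by (simp add: AA0 b_def Zf_def)
      next
        case 2 then show ?thesis using AA_T3[OF y0 xy x2 big] by (simp add: b_def Zf_def C1_def)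
      next
        case 3 then show ?thesis using AA_T1[OF y0, of j x] by (simp add: b_def Zf_def mult.commute)
      qed
    qed
    have "suminf (AA x y) \<le> suminf b" by (rule suminf_le[OF le sAA sums_summable[OF bs]])
    also have "\<dots> = pi / (12 * y) - 1 / (2 * pi * y) + C1" using bs key by (simp add: sums_iff)
    also have "\<dots> \<le> pi / (24 * y) + C1"
    proof -
      have "pi / (24 * y) \<le> 1 / (2 * pi * y)"
        using y0 pi2 pip by (simp add: field_simps power2_eq_square)
      moreover have "pi / (12 * y) = 2 * (pi / (24 * y))" by simp
      ultimately show ?thesis by linarith
    qed
    finally show ?thesis unfolding C1_def by simp
  next
    case False
    then have ntS: "nt \<le> 1 / (8 * pi)" by simp
    show ?thesis
    proof (cases "A > 9 * y^2")
      case True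
      define c where "c = y / (2 * pi * A) + 6 * pi * nt"
      define b where "b j = Zf j / (2 * pi * y) + (if j = 1 then c - 1 / (2 * pi * y) else 0)" for j
      have bs: "b sums (pi^2 / 6 / (2 * pi * y) + (c - 1 / (2 * pi * y)))"
        unfolding b_def by (intro sums_add sums_divide Zs) (rule sums_single)
      have le: "AA x y j \<le> b j" for j
      proof -
        consider "j = 0" | "j = 1" | "j \<ge> 2" by linarith
        then show ?thesis
        proof cases
          case 1 then show ?thesis by (simp add: AA0 b_def Zf_def)
        next
          case 2
          have sm: "2 * pi * real (1::nat) * cmod (Complex x y) \<le> 1/2"
            using ntS pip by (simp add: nt_def field_simps)
          show ?thesis using AA_T2[OF y0 _ sm] 2 by (simp add: b_def Zf_def c_def A_def nt_def)
        next
          case 3 then show ?thesis using AA_T1[OF y0, of j x] by (simp add: b_def Zf_def mult.commute)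
        qed
      qed
      have "suminf (AA x y) \<le> suminf b" by (rule suminf_le[OF le sAA sums_summable[OF bs]])
      also have "\<dots> = pi / (12 * y) - 1 / (2 * pi * y) + c" using bs key by (simp add: sums_iff)
      also have "\<dots> \<le> pi / (24 * y) + 1"
      proof -
        have c1: "y / (2 * pi * A) \<le> 1 / (18 * pi * y)"
        proof -
          have "y / (2 * pi * A) \<le> y / (2 * pi * (9 * y^2))"
            using True y0 pip A0 by (intro divide_left_mono mult_left_mono) (auto intro!: mult_pos_pos)
          also have "\<dots> = 1 / (18 * pi * y)" using y0 by (simp add: power2_eq_square field_simps)
          finally show ?thesis .
        qed
        have c2: "6 * pi * nt \<le> 1" using ntS pip by (simp add: field_simps)
        have c3: "pi / (24 * y) + 1 / (18 * pi * y) \<le> 1 / (2 * pi * y)"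
        proof -
          have "pi / (24 * y) + 1 / (18 * pi * y) = (3 * pi^2 + 4) / (72 * pi * y)"
            using y0 by (simp add: field_simps power2_eq_square)
          also have "\<dots> \<le> 36 / (72 * pi * y)"
            using pi2 y0 by (intro divide_right_mono) auto
          also have "\<dots> = 1 / (2 * pi * y)" by simp
          finally show ?thesis .
        qed
        have "pi / (12 * y) = 2 * (pi / (24 * y))" by simp
        then show ?thesis using c1 c2 c3 unfolding c_def by linarith
      qed
      finally show ?thesis using C10 unfolding C1_def by simp
    next
      case False
      then have A9: "A \<le> 9 * y^2" by simp
      have nt3: "nt \<le> 3 * y"
      proof -
        have e9: "(3 * y)^2 = 9 * y^2" by (simp add: power2_eq_square)
        have "nt^2 \<le> (3 * y)^2" unfolding ntA e9 by (rule A9)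
        then show ?thesis by (rule power2_le_imp_le) (use y0 in auto)
      qed
      define u where "u = 1 / (4 * pi * nt)"
      have u2: "u \<ge> 2"
      proof -
        have p8: "0 < 8 * pi" using pip by simp
        have "nt * (8 * pi) \<le> 1" using ntS pos_le_divide_eq[OF p8] by blast
        then have "2 * (4 * pi * nt) \<le> 1" by (simp add: mult_ac)
        moreover have p4: "0 < 4 * pi * nt" using pip nt0 by simp
        ultimately show ?thesis unfolding u_def using pos_le_divide_eq[OF p4] by blast
      qed
      define K where "K = nat \<lfloor>u\<rfloor>"
      have Kr: "real K = of_int \<lfloor>u\<rfloor>" using u2 by (simp add: K_def)
      have Ku: "real K \<le> u" unfolding Kr by (rule of_int_floor_le)
      have Kl: "real K \<ge> u / 2" unfolding Kr using u2 real_of_int_floor_gt_diff_one[of u] by linarith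
      have K1: "K \<ge> 1" using Kl u2 by linarith
      define c where "c = y / (2 * pi * A)"
      define tel where "tel j = (if K < j then 1 / real (j - 1) - 1 / real j else 0)" for j
      define b where "b j = c * Zf j + (if j \<in> {1..K} then 6 * pi * nt else 0) + tel j / (2 * pi * y)" for j
      have bs: "b sums (c * (pi^2 / 6) + (\<Sum>r\<in>{1..K}. 6 * pi * nt) + (1 / real K) / (2 * pi * y))"
      proof -
        have s1: "(\<lambda>j. c * Zf j) sums (c * (pi^2 / 6))" by (rule sums_mult[OF Zs])
        have s2: "(\<lambda>j. if j \<in> {1..K} then 6 * pi * nt else 0) sums (\<Sum>r\<in>{1..K}. 6 * pi * nt)"
          by (rule sums_If_finite_set) simp
        have s3: "(\<lambda>j. tel j / (2 * pi * y)) sums ((1 / real K) / (2 * pi * y))"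
          unfolding tel_def by (rule sums_divide[OF tel_sums[OF K1]])
        show ?thesis unfolding b_def by (rule sums_add[OF sums_add[OF s1 s2] s3])
      qed
      have c0: "c \<ge> 0" using y0 A0 by (simp add: c_def)
      have tel0: "tel j \<ge> 0" for j
      proof (cases "K < j")
        case True
        then have "j \<ge> 2" using K1 by linarith
        with inv_sq_le_tel[OF this] True show ?thesis
          by (simp add: tel_def) (smt (verit) zero_le_divide_1_iff zero_le_power2)
      qed (simp add: tel_def)
      have le: "AA x y j \<le> b j" for j
      proof -
        consider "j = 0" | "j \<ge> 1 \<and> j \<le> K" | "K < j" by linarith
        then show ?thesis
        proof cases
          case 1 then show ?thesis by (simp add: AA0 b_def Zf_def tel_def)
        next
          case 2
          have sm: "2 * pi * real j * cmod (Complex x y) \<le> 1/2"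
          proof -
            have "2 * pi * real j * nt \<le> 2 * pi * u * nt"
              using 2 Ku pip nt0 by (intro mult_right_mono mult_left_mono) auto
            also have "\<dots> = 1/2" using nt0 pip by (simp add: u_def field_simps)
            finally show ?thesis by (simp add: nt_def)
          qed
          have "AA x y j \<le> y / (2 * pi * A * (real j)^2) + 6 * pi * nt"
            using AA_T2[OF y0 _ sm] 2 by (simp add: A_def nt_def)
          also have "\<dots> = b j" using 2
            by (simp add: b_def Zf_def tel_def c_def)
          finally show ?thesis .
        next
          case 3
          then have j2: "j \<ge> 2" using K1 by linarith
          have "AA x y j \<le> 1 / (2 * pi * y * (real j)^2)" using AA_T1[OF y0, of j x] j2 by simp
          also have "\<dots> = (1 / (real j)^2) / (2 * pi * y)" by (simp add: field_simps)
          also have "\<dots> \<le> tel j / (2 * pi * y)"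
            using inv_sq_le_tel[OF j2] 3 y0 by (intro divide_right_mono) (auto simp: tel_def)
          also have "\<dots> \<le> b j"
            using c0 Zf_nonneg[of j] 3 by (simp add: b_def mult_nonneg_nonneg)
          finally show ?thesis .
        qed
      qed
      have "suminf (AA x y) \<le> suminf b" by (rule suminf_le[OF le sAA sums_summable[OF bs]])
      also have "\<dots> = c * (pi^2 / 6) + real K * (6 * pi * nt) + (1 / real K) / (2 * pi * y)"
        using bs by (simp add: sums_iff)
      also have "\<dots> \<le> pi / (24 * y) + 3/2 + 12"
      proof -
        have d1: "c * (pi^2 / 6) \<le> pi / (24 * y)"
        proof -
          have "c \<le> y / (2 * pi * (2 * y^2))"
            unfolding c_def using A2 y0 pip A0 by (intro divide_left_mono mult_left_mono) (auto intro!: mult_pos_pos)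
          also have "\<dots> = 1 / (4 * pi * y)" using y0 by (simp add: power2_eq_square field_simps)
          finally have "c * (pi^2 / 6) \<le> 1 / (4 * pi * y) * (pi^2 / 6)"
            by (intro mult_right_mono) auto
          also have "\<dots> = pi / (24 * y)" using y0 by (simp add: power2_eq_square field_simps)
          finally show ?thesis .
        qed
        have d2: "real K * (6 * pi * nt) \<le> 3/2"
        proof -
          have "real K * (6 * pi * nt) \<le> u * (6 * pi * nt)"
            using Ku nt0 pip by (intro mult_right_mono) auto
          also have "\<dots> = 3/2" using nt0 pip by (simp add: u_def field_simps)
          finally show ?thesis .
        qed
        have d3: "(1 / real K) / (2 * pi * y) \<le> 12"
        proof -
          have Kp: "real K > 0" using K1 by simp
          have "1 / real K \<le> 8 * pi * nt"
          proof -
            have "1 / real K \<le> 1 / (u / 2)" using Kl u2 by (intro divide_left_mono) auto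
            also have "\<dots> = 8 * pi * nt" using nt0 pip by (simp add: u_def field_simps)
            finally show ?thesis .
          qed
          also have "\<dots> \<le> 8 * pi * (3 * y)" using nt3 pip by simp
          finally have "(1 / real K) / (2 * pi * y) \<le> (8 * pi * (3 * y)) / (2 * pi * y)"
            using y0 by (intro divide_right_mono) auto
          also have "\<dots> = 12" using y0 by simp
          finally show ?thesis .
        qed
        show ?thesis using d1 d2 d3 by linarith
      qed
      finally show ?thesis using C10 unfolding C1_def by simp
    qed
  qed
qed

lemma g_mono:
  assumes "0 < d1" "d1 \<le> d2"
  shows "6 / (d2 * sqrt d2) \<le> 6 / (d1 * sqrt d1)"
proof (rule divide_left_mono)
  show "d1 * sqrt d1 \<le> d2 * sqrt d2" using assms by (intro mult_mono) auto
  show "0 < d2 * sqrt d2 * (d1 * sqrt d1)" using assms by (intro mult_pos_pos) auto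
qed simp

lemma g_eq: "0 < d \<Longrightarrow> 6 / (d * sqrt d) = 6 * ((1/d) * sqrt (1/d))"
  by (simp add: real_sqrt_divide field_simps)

lemma main_bound:
  fixes m :: nat
  assumes y0: "0 < y" and xy: "y \<le> \<bar>x\<bar>" and x2: "\<bar>x\<bar> \<le> 1/2"
  shows "norm ((h_fun (qq x y) - of_nat m * h_fun (qq x y ^ m)) / qpoch_inf (qq x y))
     \<le> 6 * (1 + real m) * (((1 + pi) / (2 * pi * y)) * sqrt ((1 + pi) / (2 * pi * y)))
         * exp (pi / (24 * y) + (exp pi / sin (1/6) + 14))"
proof -
  define q where "q = qq x y"
  define \<delta> where "\<delta> = 1 - norm q"
  define D where "D = (1 + pi) / (2 * pi * y)"
  have nq: "norm q = exp (- (2 * pi * y))" using norm_qq_pow[of x y 1] by (simp add: q_def)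
  have q1: "norm q < 1" using nq y0 by simp
  have d0: "0 < \<delta>" using q1 by (simp add: \<delta>_def)
  have y2: "y \<le> 1/2" using xy x2 by linarith
  have dD: "1 / \<delta> \<le> D"
  proof -
    define s where "s = 2 * pi * y"
    have s0: "0 < s" using y0 by (simp add: s_def)
    have spi: "s \<le> pi" using y2 by (simp add: s_def)
    have "exp (- s) \<le> 1 / (1 + s)"
    proof -
      have "1 + s \<le> exp s" by (rule exp_ge_add_one_self)
      then have "1 / exp s \<le> 1 / (1 + s)" using s0 by (intro divide_left_mono) auto
      then show ?thesis by (simp add: exp_minus divide_inverse)
    qed
    then have "\<delta> \<ge> 1 - 1 / (1 + s)" by (simp add: \<delta>_def nq s_def)
    also have "1 - 1 / (1 + s) = s / (1 + s)" using s0 by (simp add: field_simps)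
    also have "s / (1 + s) \<ge> s / (1 + pi)" using s0 spi by (intro divide_left_mono) auto
    finally have "s / (1 + pi) \<le> \<delta>" .
    then have "1 / \<delta> \<le> 1 / (s / (1 + pi))" using s0 pi_gt_zero d0 add_pos_pos[OF zero_less_one pi_gt_zero] by (intro divide_left_mono) (auto intro!: mult_pos_pos divide_pos_pos)
    also have "\<dots> = D" by (simp add: D_def s_def)
    finally show ?thesis .
  qed
  have D0: "0 < D"
  proof -
    have "0 < 1 / \<delta>" using d0 by simp
    then show ?thesis using dD by linarith
  qed
  have gD: "6 / (\<delta> * sqrt \<delta>) \<le> 6 * (D * sqrt D)"
  proof -
    have "6 / (\<delta> * sqrt \<delta>) = 6 * ((1/\<delta>) * sqrt (1/\<delta>))" by (rule g_eq[OF d0])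
    also have "\<dots> \<le> 6 * (D * sqrt D)" using dD d0 D0 by (intro mult_left_mono mult_mono) auto
    finally show ?thesis .
  qed
  have h1: "norm (h_fun q) \<le> 6 * (D * sqrt D)"
    using h_bound[OF q1] gD by (simp add: \<delta>_def)
  have h2: "norm (h_fun (q^m)) \<le> 6 * (D * sqrt D)"
  proof (cases "m = 0")
    case True
    have "h_fun 1 = 0" by (simp add: h_fun_def)
    then show ?thesis using True D0 by simp
  next
    case False
    have qm1: "norm (q^m) < 1" using q1 False by (simp add: norm_power power_less_one_iff)
    have "norm (q^m) \<le> norm q"
    proof -
      have "norm (q^m) = norm q ^ m" by (simp add: norm_power)
      also have "\<dots> \<le> norm q ^ 1" using False q1 by (intro power_decreasing) auto
      finally show ?thesis by simp
    qed
    then have "\<delta> \<le> 1 - norm (q^m)" by (simp add: \<delta>_def)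
    then have "6 / ((1 - norm (q^m)) * sqrt (1 - norm (q^m))) \<le> 6 / (\<delta> * sqrt \<delta>)"
      by (rule g_mono[OF d0])
    then show ?thesis using h_bound[OF qm1] gD by linarith
  qed
  have hdiff: "norm (h_fun q - of_nat m * h_fun (q^m)) \<le> 6 * (1 + real m) * (D * sqrt D)"
  proof -
    have "norm (h_fun q - of_nat m * h_fun (q^m)) \<le> norm (h_fun q) + real m * norm (h_fun (q^m))"
      using norm_triangle_ineq4[of "h_fun q" "of_nat m * h_fun (q^m)"] by (simp add: norm_mult)
    also have "\<dots> \<le> 6 * (D * sqrt D) + real m * (6 * (D * sqrt D))"
      using h1 h2 by (intro add_mono mult_left_mono) auto
    finally show ?thesis by (simp add: algebra_simps)
  qed
  have P: "norm (qpoch_inf q) = exp (- suminf (AA x y))"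
    using lambert(1)[OF q1] by (simp add: AA_def[abs_def] q_def)
  have L: "suminf (AA x y) \<le> pi / (24 * y) + (exp pi / sin (1/6) + 14)" by (rule L_bound[OF y0 xy x2])
  have "norm ((h_fun q - of_nat m * h_fun (q^m)) / qpoch_inf q)
      = norm (h_fun q - of_nat m * h_fun (q^m)) * exp (suminf (AA x y))"
  proof -
    have "norm ((h_fun q - of_nat m * h_fun (q^m)) / qpoch_inf q)
        = norm (h_fun q - of_nat m * h_fun (q^m)) / norm (qpoch_inf q)" by (rule norm_divide)
    also have "\<dots> = norm (h_fun q - of_nat m * h_fun (q^m)) / exp (- suminf (AA x y))" by (simp only: P)
    also have "\<dots> = norm (h_fun q - of_nat m * h_fun (q^m)) * exp (suminf (AA x y))"
      by (simp add: exp_minus divide_inverse)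
    finally show ?thesis .
  qed
  also have "\<dots> \<le> (6 * (1 + real m) * (D * sqrt D)) * exp (pi / (24 * y) + (exp pi / sin (1/6) + 14))"
    using hdiff L D0 by (intro mult_mono) auto
  finally show ?thesis by (simp add: q_def D_def)
qed

theorem proposition2p8:
  fixes m :: nat
  assumes "m \<ge> 2"
  shows "\<exists>C. \<forall>(N::real) (x::real). N > 0 \<longrightarrow>
           1 / (2 * sqrt (6 * N)) \<le> \<bar>x\<bar> \<longrightarrow> \<bar>x\<bar> \<le> 1 / 2 \<longrightarrow>
           (let y = 1 / (2 * sqrt (6 * N));
                q = exp (2 * complex_of_real pi * \<i> * Complex x y)
            in norm ((h_fun q - of_nat m * h_fun (q ^ m)) / qpoch_inf q)
                 \<le> C * N powr (3/4) * exp (pi / 2 * sqrt (N / 6)))"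
proof -
  define C0 where "C0 = exp pi / sin (1/6) + 14"
  define k where "k = (1 + pi) * sqrt 6 / pi"
  have k0: "k > 0" by (simp add: k_def add_pos_pos)
  define C where "C = 6 * (1 + real m) * (k * sqrt k) * exp C0"
  show ?thesis
  proof (rule exI[of _ C], intro allI impI)
    fix N x :: real
    assume N0: "N > 0" and xy: "1 / (2 * sqrt (6 * N)) \<le> \<bar>x\<bar>" and x2: "\<bar>x\<bar> \<le> 1 / 2"
    define y where "y = 1 / (2 * sqrt (6 * N))"
    have y0: "0 < y" using N0 by (simp add: y_def)
    have s6N: "sqrt (6 * N) = sqrt 6 * sqrt N" by (simp add: real_sqrt_mult)
    have s66: "sqrt 6 * sqrt 6 = (6::real)" by simp
    have sN0: "sqrt N > 0" using N0 by simp
    have MB: "norm ((h_fun (qq x y) - of_nat m * h_fun (qq x y ^ m)) / qpoch_inf (qq x y))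
     \<le> 6 * (1 + real m) * (((1 + pi) / (2 * pi * y)) * sqrt ((1 + pi) / (2 * pi * y)))
         * exp (pi / (24 * y) + C0)"
      unfolding C0_def by (rule main_bound[OF y0]) (use xy x2 in \<open>auto simp: y_def\<close>)
    have Deq: "(1 + pi) / (2 * pi * y) = k * sqrt N"
      unfolding y_def k_def s6N using sN0 by (simp add: field_simps)
    have sq: "sqrt (k * sqrt N) = sqrt k * N powr (1/4)"
    proof -
      have "sqrt (sqrt N) = N powr (1/4)"
        using N0 by (simp add: sqrt_def root_powr_inverse powr_powr)
      then show ?thesis by (simp add: real_sqrt_mult)
    qed
    have p34: "sqrt N * N powr (1/4) = N powr (3/4)"
    proof -
      have h: "sqrt N = N powr (1/2)" using N0 by (simp add: powr_half_sqrt)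
      have "sqrt N * N powr (1/4) = N powr (1/2 + 1/4)" by (simp only: powr_add h)
      moreover have "(1/2 + 1/4 :: real) = 3/4" by simp
      ultimately show ?thesis by simp
    qed
    have E: "pi / (24 * y) = pi / 2 * sqrt (N / 6)"
    proof -
      have "sqrt (N / 6) = sqrt N / sqrt 6" by (simp add: real_sqrt_divide)
      moreover have "sqrt N / sqrt 6 = sqrt N * sqrt 6 / 6" using s66 by (simp add: field_simps)
      ultimately show ?thesis unfolding y_def s6N by (simp add: field_simps)
    qed
    have "((1 + pi) / (2 * pi * y)) * sqrt ((1 + pi) / (2 * pi * y)) = (k * sqrt k) * N powr (3/4)"
      unfolding Deq sq using p34 by (simp add: mult_ac)
    then show "let y = 1 / (2 * sqrt (6 * N)); q = exp (2 * complex_of_real pi * \<i> * Complex x y)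
            in norm ((h_fun q - of_nat m * h_fun (q ^ m)) / qpoch_inf q)
                 \<le> C * N powr (3/4) * exp (pi / 2 * sqrt (N / 6))"
      using MB unfolding Let_def y_def[symmetric] qq_def[symmetric] E
      by (simp add: C_def exp_add mult_ac)
  qed
qed

end
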